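(* Let $d\ge3$, $\gamma\in\mathcal{P}_{\mathcal{W}_d}$, and let $(\beta_n)$ be probability measures on $\mathcal{B}([0,\infty))$ with $\beta_n(\{0\})=0$ for all $n$ (not necessarily in $\mathcal{P}_{\mathcal{W}_d}$), converging weakly to $\gamma$. Then there is a sequence $(a_n)$ in $(0,\infty)$ converging to $1$ such that each push-forward $\gamma_n:=\beta_n^{T_{a_n}}$ belongs to $\mathcal{P}_{\mathcal{W}_d}$ and $(\gamma_n)$ converges weakly to $\gamma$ on $[0,\infty)$.
   Context: $\mathcal{P}_{\mathcal{W}_d}$ is the set of probability measures $\gamma$ on $\mathcal{B}([0,\infty))$ with $\gamma(\{0\})=0$ and $\int_{[0,1]}(1-t)^{d-1}\,d\gamma(t)=1/2$. For $a\in(0,\infty)$, $T_a(x)=ax$, and $\beta^{T_a}=\beta\circ T_a^{-1}$ denotes the push-forward of $\beta$ under $T_a$. *)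

theory Defs
  imports "HOL-Probability.Probability"
begin

definition prob_nonneg :: "real measure \<Rightarrow> bool" where
  "prob_nonneg M \<longleftrightarrow> prob_space M \<and> sets M = sets (restrict_space borel {0::real..})"

definition PWd :: "nat \<Rightarrow> real measure \<Rightarrow> bool" where
  "PWd d M \<longleftrightarrow> prob_nonneg M \<and> measure M {0} = 0 \<and>
     (LINT t:{0..1}|M. (1 - t) ^ (d - 1)) = 1 / 2"

definition pushT :: "real \<Rightarrow> real measure \<Rightarrow> real measure" where
  "pushT a M = distr M (restrict_space borel {0::real..}) (\<lambda>x. a * x)"

definition weak_conv_nonneg :: "(nat \<Rightarrow> real measure) \<Rightarrow> real measure \<Rightarrow> bool" where
  "weak_conv_nonneg Ms M \<longleftrightarrow>
     (\<forall>f::real \<Rightarrow> real. continuous_on {0..} f \<and> bounded (f ` {0..}) \<longrightarrow>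
        (\<lambda>n. \<integral>x. f x \<partial>(Ms n)) \<longlonglongrightarrow> (\<integral>x. f x \<partial>M))"

end

theory Submission
  imports Defs
begin

definition gk :: "nat \<Rightarrow> real \<Rightarrow> real" where
  "gk k x = (max 0 (1 - max 0 x)) ^ k"

lemma gk_cont: "isCont (gk k) x"
  unfolding gk_def by (intro continuous_intros)

lemma gk_ge0: "0 \<le> gk k x"
  unfolding gk_def by simp

lemma gk_le1: "gk k x \<le> 1"
  unfolding gk_def by (intro power_le_one) auto

lemma gk_abs: "\<bar>gk k x\<bar> \<le> 1"
  using gk_ge0 gk_le1 by (simp add: abs_le_iff)

lemma gk_mono: "x \<le> y \<Longrightarrow> gk k y \<le> gk k x"
  unfolding gk_def by (intro power_mono) auto

lemma gk_meas[measurable]: "gk k \<in> borel_measurable borel"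
  unfolding gk_def by measurable

lemma gk_zero: "k \<ge> 1 \<Longrightarrow> 1 \<le> x \<Longrightarrow> gk k x = 0"
  unfolding gk_def by simp

lemma gk_at0: "gk k 0 = 1"
  unfolding gk_def by simp

lemma gk_eq: "k \<ge> 1 \<Longrightarrow> 0 \<le> t \<Longrightarrow> gk k t = indicator {0..1} t * (1 - t) ^ k"
  unfolding gk_def by (cases "t \<le> 1") (auto simp: indicator_def)

lemma gk_strict:
  assumes k: "k \<ge> 1" and c: "c > 0" "c \<noteq> 1" and x: "0 < x" "x < 1"
  shows "gk k (c * x) \<noteq> gk k x"
proof (cases "c < 1")
  case True
  then have "c * x < x" using x by simp
  then have "(1 - x) ^ k < (1 - c * x) ^ k"
    using x k by (intro power_strict_mono) auto
  moreover have "c * x > 0" using x c by simp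
  moreover have "gk k (c*x) = (1 - c*x)^k" "gk k x = (1 - x)^k"
    using x c \<open>c*x < x\<close> \<open>c * x > 0\<close> unfolding gk_def by auto
  ultimately show ?thesis by simp
next
  case False
  then have c1: "c > 1" using c by simp
  then have "x < c * x" using x by simp
  show ?thesis
  proof (cases "c * x < 1")
    case True
    then have "(1 - c*x) ^ k < (1 - x) ^ k"
      using x k \<open>x < c*x\<close> by (intro power_strict_mono) auto
    moreover have "gk k (c*x) = (1 - c*x)^k" "gk k x = (1 - x)^k"
      using x c True unfolding gk_def by auto
    ultimately show ?thesis by simp
  next
    case False
    then have "gk k (c*x) = 0" using k by (intro gk_zero) auto
    moreover have "gk k x = (1 - x)^k" using x unfolding gk_def by auto
    moreover have "(1 - x)^k > 0" using x by simp
    ultimately show ?thesis using x by auto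
  qed
qed

lemma nn_sets: "prob_nonneg M \<Longrightarrow> sets M = sets (restrict_space borel {0::real..})"
  unfolding prob_nonneg_def by simp

lemma nn_space: "prob_nonneg M \<Longrightarrow> space M = {0::real..}"
  using sets_eq_imp_space_eq[OF nn_sets] by (simp add: space_restrict_space)

lemma nn_prob: "prob_nonneg M \<Longrightarrow> prob_space M"
  unfolding prob_nonneg_def by simp

lemma meas_nn:
  assumes "prob_nonneg M" "f \<in> borel_measurable borel"
  shows "f \<in> borel_measurable M"
  using assms(2) by (subst measurable_cong_sets[OF nn_sets[OF assms(1)] refl])
    (rule measurable_restrict_space1)

lemma meas_id_nn:
  assumes "prob_nonneg M"
  shows "(\<lambda>x. x) \<in> M \<rightarrow>\<^sub>M borel"
  using meas_nn[OF assms, of "\<lambda>x. x"] by simp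

lemma meas_mult_nn:
  assumes "prob_nonneg M" "a > 0"
  shows "(\<lambda>x. a * x) \<in> M \<rightarrow>\<^sub>M restrict_space borel {0::real..}"
proof -
  have "(\<lambda>x. a * x) \<in> restrict_space borel {0::real..} \<rightarrow>\<^sub>M restrict_space borel {0::real..}"
    by (rule measurable_restrict_space3) (use assms(2) in auto)
  then show ?thesis
    by (subst measurable_cong_sets[OF nn_sets[OF assms(1)] refl])
qed

lemma int_push:
  fixes h :: "real \<Rightarrow> real"
  assumes "prob_nonneg M" "a > 0" "h \<in> borel_measurable (restrict_space borel {0::real..})"
  shows "integral\<^sup>L (pushT a M) h = (\<integral>x. h (a * x) \<partial>M)"
  unfolding pushT_def by (rule integral_distr[OF meas_mult_nn[OF assms(1,2)] assms(3)])

lemma integrable_gk: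
  assumes "prob_nonneg M"
  shows "integrable M (\<lambda>x. gk k (c * x))"
proof -
  interpret prob_space M using nn_prob[OF assms] .
  show ?thesis
    by (rule integrable_const_bound[where B=1]) (auto simp: gk_abs intro!: meas_nn[OF assms])
qed

lemma PW_push:
  assumes M: "prob_nonneg M" and M0: "measure M {0} = 0" and a: "a > 0" and d: "d \<ge> 2"
    and I: "(\<integral>x. gk (d - 1) (a * x) \<partial>M) = 1 / 2"
  shows "PWd d (pushT a M)"
proof -
  interpret prob_space M using nn_prob[OF M] .
  have "prob_nonneg (pushT a M)"
    unfolding prob_nonneg_def pushT_def
    by (auto intro!: prob_space_distr meas_mult_nn[OF M a])
  moreover have "measure (pushT a M) {0} = 0"
  proof -
    have "{0::real} \<in> sets (restrict_space borel {0::real..})"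
      by (auto simp: sets_restrict_space_iff)
    then have "measure (pushT a M) {0} = measure M ((\<lambda>x. a * x) -` {0} \<inter> space M)"
      unfolding pushT_def by (rule measure_distr[OF meas_mult_nn[OF M a]])
    also have "(\<lambda>x. a * x) -` {0} \<inter> space M = {0}"
      using a by (auto simp: nn_space[OF M])
    finally show ?thesis using M0 by simp
  qed
  moreover have "(LINT t:{0..1}|pushT a M. (1 - t) ^ (d - 1)) = 1 / 2"
  proof -
    have "(LINT t:{0..1}|pushT a M. (1 - t) ^ (d - 1))
        = (\<integral>t. indicator {0..1} t * (1 - t) ^ (d - 1) \<partial>pushT a M)"
      by (simp add: set_lebesgue_integral_def)
    also have "\<dots> = (\<integral>x. indicator {0..1} (a*x) * (1 - a*x) ^ (d - 1) \<partial>M)"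
      by (rule int_push[OF M a]) (intro measurable_restrict_space1; measurable)
    also have "\<dots> = (\<integral>x. gk (d - 1) (a * x) \<partial>M)"
      using a d by (intro Bochner_Integration.integral_cong) (auto simp: nn_space[OF M] gk_eq)
    finally show ?thesis using I by simp
  qed
  ultimately show ?thesis unfolding PWd_def by simp
qed

lemma conv_lemma:
  fixes F :: "real \<Rightarrow> real"
  assumes \<beta>: "\<And>n. prob_nonneg (\<beta> n)" and \<gamma>: "prob_nonneg \<gamma>"
    and wc: "weak_conv_nonneg \<beta> \<gamma>"
    and Fc: "\<And>x. isCont F x" and FB: "\<And>x. \<bar>F x\<bar> \<le> B"
    and a: "a \<longlonglongrightarrow> c"
  shows "(\<lambda>n. \<integral>x. F (a n * x) \<partial>\<beta> n) \<longlonglongrightarrow> (\<integral>x. F (c * x) \<partial>\<gamma>)"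
proof -
  define \<mu> where "\<mu> n = distr (\<beta> n) borel (\<lambda>x. x)" for n
  define \<mu>0 where "\<mu>0 = distr \<gamma> borel (\<lambda>x. x)"
  have rd: "real_distribution (distr M borel (\<lambda>x. x))" if "prob_nonneg M" for M
    unfolding real_distribution_def real_distribution_axioms_def
    by (auto intro!: prob_space.prob_space_distr[OF nn_prob[OF that]] meas_id_nn[OF that])
  have rdmu: "real_distribution (\<mu> n)" for n unfolding \<mu>_def by (rule rd[OF \<beta>])
  have rdmu0: "real_distribution \<mu>0" unfolding \<mu>0_def by (rule rd[OF \<gamma>])
  have int_mu: "integral\<^sup>L (\<mu> n) f = integral\<^sup>L (\<beta> n) f" if "f \<in> borel_measurable borel"
    for n and f :: "real \<Rightarrow> real"
    unfolding \<mu>_def by (subst integral_distr[OF meas_id_nn[OF \<beta>] that]) simp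
  have int_mu0: "integral\<^sup>L \<mu>0 f = integral\<^sup>L \<gamma> f" if "f \<in> borel_measurable borel"
    for f :: "real \<Rightarrow> real"
    unfolding \<mu>0_def by (subst integral_distr[OF meas_id_nn[OF \<gamma>] that]) simp
  have wcm: "weak_conv_m \<mu> \<mu>0"
  proof (rule integral_bdd_continuous_conv_imp_weak_conv[OF rdmu rdmu0])
    fix f :: "real \<Rightarrow> real"
    assume fc: "\<And>x. isCont f x" and fb: "\<And>x. \<bar>f x\<bar> \<le> 1"
    have fm: "f \<in> borel_measurable borel"
      by (intro borel_measurable_continuous_onI continuous_at_imp_continuous_on) (auto intro: fc)
    have "continuous_on {0..} f" by (intro continuous_at_imp_continuous_on) (auto intro: fc)
    moreover have "bounded (f ` {0..})"
      unfolding bounded_iff using fb by auto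
    ultimately have "(\<lambda>n. \<integral>x. f x \<partial>(\<beta> n)) \<longlonglongrightarrow> (\<integral>x. f x \<partial>\<gamma>)"
      using wc unfolding weak_conv_nonneg_def by blast
    then show "(\<lambda>n. integral\<^sup>L (\<mu> n) f) \<longlonglongrightarrow> integral\<^sup>L \<mu>0 f"
      by (simp add: int_mu[OF fm] int_mu0[OF fm])
  qed
  obtain Omega Y_seq Y where
    ps_Omega: "prob_space Omega" and
    Y_seq_measurable [measurable]: "\<And>n. Y_seq n \<in> borel_measurable Omega" and
    distr_Y_seq: "\<And>n. distr Omega borel (Y_seq n) = \<mu> n" and
    Y_measurable [measurable]: "Y \<in> borel_measurable Omega" and
    distr_Y: "distr Omega borel Y = \<mu>0" and
    YnY: "\<And>x :: real. x \<in> space Omega \<Longrightarrow> (\<lambda>n. Y_seq n x) \<longlonglongrightarrow> Y x"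
    using Skorohod[OF rdmu rdmu0 wcm] by force
  interpret Om: prob_space Omega by (rule ps_Omega)
  have Fm[measurable]: "F \<in> borel_measurable borel"
    by (intro borel_measurable_continuous_onI continuous_at_imp_continuous_on) (auto intro: Fc)
  have e1: "(\<integral>x. F (a n * x) \<partial>\<beta> n) = (\<integral>w. F (a n * Y_seq n w) \<partial>Omega)" for n
  proof -
    have "(\<integral>x. F (a n * x) \<partial>\<beta> n) = (\<integral>x. F (a n * x) \<partial>\<mu> n)"
      by (rule int_mu[symmetric]) measurable
    also have "\<dots> = (\<integral>w. F (a n * Y_seq n w) \<partial>Omega)"
      unfolding distr_Y_seq[symmetric] by (rule integral_distr) measurable
    finally show ?thesis .
  qed
  have e2: "(\<integral>x. F (c * x) \<partial>\<gamma>) = (\<integral>w. F (c * Y w) \<partial>Omega)"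
  proof -
    have "(\<integral>x. F (c * x) \<partial>\<gamma>) = (\<integral>x. F (c * x) \<partial>\<mu>0)"
      by (rule int_mu0[symmetric]) measurable
    also have "\<dots> = (\<integral>w. F (c * Y w) \<partial>Omega)"
      unfolding distr_Y[symmetric] by (rule integral_distr) measurable
    finally show ?thesis .
  qed
  have "(\<lambda>n. \<integral>w. F (a n * Y_seq n w) \<partial>Omega) \<longlonglongrightarrow> (\<integral>w. F (c * Y w) \<partial>Omega)"
  proof (rule integral_dominated_convergence[where w="\<lambda>x. B"])
    show "AE x in Omega. (\<lambda>n. F (a n * Y_seq n x)) \<longlonglongrightarrow> F (c * Y x)"
      by (intro AE_I2 isCont_tendsto_compose[OF Fc] tendsto_mult a YnY)
  qed (auto simp: FB)
  then show ?thesis unfolding e1 e2 .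
qed


lemma AE_eq_of_int_eq:
  fixes f g :: "'a \<Rightarrow> real"
  assumes "integrable M f" "integrable M g" "\<forall>x\<in>space M. f x \<le> g x"
    "integral\<^sup>L M f = integral\<^sup>L M g"
  shows "AE x in M. f x = g x"
proof -
  have "integral\<^sup>L M (\<lambda>x. g x - f x) = 0" using assms by simp
  moreover have "AE x in M. 0 \<le> g x - f x" using assms(3) by (auto intro!: AE_I2)
  ultimately have "AE x in M. g x - f x = 0"
    using integral_nonneg_eq_0_iff_AE[of M "\<lambda>x. g x - f x"] assms(1,2) by simp
  then show ?thesis by auto
qed

theorem lemmaB1:
  fixes d :: nat and \<gamma> :: "real measure" and \<beta> :: "nat \<Rightarrow> real measure"
  assumes "d \<ge> 3"
    and "PWd d \<gamma>"
    and "\<And>n. prob_nonneg (\<beta> n)"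
    and "\<And>n. measure (\<beta> n) {0} = 0"
    and "weak_conv_nonneg \<beta> \<gamma>"
  shows "\<exists>a :: nat \<Rightarrow> real. (\<forall>n. a n > 0) \<and> a \<longlonglongrightarrow> 1 \<and>
           (\<forall>n. PWd d (pushT (a n) (\<beta> n))) \<and>
           weak_conv_nonneg (\<lambda>n. pushT (a n) (\<beta> n)) \<gamma>"
proof -
  define k where "k = d - 1"
  have k1: "k \<ge> 1" and d2: "d \<ge> 2" using assms(1) by (auto simp: k_def)
  have \<gamma>nn: "prob_nonneg \<gamma>" and \<gamma>0: "measure \<gamma> {0} = 0"
    and \<gamma>I: "(LINT t:{0..1}|\<gamma>. (1 - t) ^ (d - 1)) = 1 / 2"
    using assms(2) unfolding PWd_def by auto
  define \<Phi> where "\<Phi> n c = (\<integral>x. gk k (c * x) \<partial>\<beta> n)" for n c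
  define \<Psi> where "\<Psi> c = (\<integral>x. gk k (c * x) \<partial>\<gamma>)" for c
  have G1: "(\<integral>x. gk k x \<partial>\<gamma>) = 1 / 2"
  proof -
    have "(\<integral>x. gk k x \<partial>\<gamma>) = (\<integral>t. indicator {0..1} t * (1 - t) ^ (d - 1) \<partial>\<gamma>)"
      using k1 by (intro Bochner_Integration.integral_cong) (auto simp: nn_space[OF \<gamma>nn] gk_eq k_def)
    also have "\<dots> = 1 / 2" using \<gamma>I by (simp add: set_lebesgue_integral_def)
    finally show ?thesis .
  qed
  have \<Phi>lim: "(\<lambda>n. \<Phi> n c) \<longlonglongrightarrow> \<Psi> c" for c
    using conv_lemma[OF assms(3) \<gamma>nn assms(5) gk_cont gk_abs, of "\<lambda>_. c" c]
    by (simp add: \<Phi>_def \<Psi>_def)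
  have \<Phi>mono: "\<Phi> n b \<le> \<Phi> n c" if "c \<le> b" for n b c
    unfolding \<Phi>_def
    by (intro integral_mono integrable_gk assms(3))
       (auto simp: nn_space[OF assms(3)] intro!: gk_mono mult_right_mono that)
  have \<Psi>mono: "\<Psi> b \<le> \<Psi> c" if "c \<le> b" for b c
    unfolding \<Psi>_def
    by (intro integral_mono integrable_gk \<gamma>nn)
       (auto simp: nn_space[OF \<gamma>nn] intro!: gk_mono mult_right_mono that)
  have \<Phi>cont: "isCont (\<Phi> n) c" for n c
  proof (rule continuous_at_sequentiallyI)
    fix u assume u: "u \<longlonglongrightarrow> c"
    interpret prob_space "\<beta> n" using nn_prob[OF assms(3)] .
    show "(\<lambda>i. \<Phi> n (u i)) \<longlonglongrightarrow> \<Phi> n c" unfolding \<Phi>_def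
      by (rule integral_dominated_convergence[where w="\<lambda>_. 1"])
         (auto intro!: meas_nn[OF assms(3)] isCont_tendsto_compose[OF gk_cont] tendsto_mult u
           simp: gk_abs)
  qed
  have AE0: "AE x in \<beta> n. x \<noteq> 0" for n
  proof -
    interpret prob_space "\<beta> n" using nn_prob[OF assms(3)] .
    have "{0} \<in> sets (\<beta> n)" by (simp add: nn_sets[OF assms(3)] sets_restrict_space_iff)
    then have "{0} \<in> null_sets (\<beta> n)" using assms(4)[of n]
      by (simp add: null_sets_def emeasure_eq_measure)
    then show ?thesis by (rule AE_I') auto
  qed
  have AEg0: "AE x in \<gamma>. x \<noteq> 0"
  proof -
    interpret prob_space "\<gamma>" using nn_prob[OF \<gamma>nn] .
    have "{0} \<in> sets \<gamma>" by (simp add: nn_sets[OF \<gamma>nn] sets_restrict_space_iff)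
    then have "{0} \<in> null_sets \<gamma>" using \<gamma>0
      by (simp add: null_sets_def emeasure_eq_measure)
    then show ?thesis by (rule AE_I') auto
  qed
  have lim_inf: "(\<lambda>j. \<Phi> n (real j)) \<longlonglongrightarrow> 0" for n
  proof -
    interpret prob_space "\<beta> n" using nn_prob[OF assms(3)] .
    have "(\<lambda>j. \<Phi> n (real j)) \<longlonglongrightarrow> (\<integral>x. 0 \<partial>\<beta> n)" unfolding \<Phi>_def
    proof (rule integral_dominated_convergence[where w="\<lambda>_. 1"])
      show "AE x in \<beta> n. (\<lambda>j. gk k (real j * x)) \<longlonglongrightarrow> 0"
        using AE0[of n] AE_space
      proof eventually_elim
        case (elim x)
        then have x: "x > 0" by (auto simp: nn_space[OF assms(3)])
        have "eventually (\<lambda>j. gk k (real j * x) = 0) sequentially"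
          unfolding eventually_sequentially
        proof (intro exI allI impI)
          fix j assume "nat \<lceil>1 / x\<rceil> \<le> j"
          then have "1 / x \<le> real j" by linarith
          then have "1 \<le> real j * x" using x by (simp add: field_simps)
          then show "gk k (real j * x) = 0" by (rule gk_zero[OF k1])
        qed
        then show ?case by (rule tendsto_eventually)
      qed
    qed (auto intro!: meas_nn[OF assms(3)] simp: gk_abs)
    then show ?thesis by simp
  qed
  have lim_zero: "(\<lambda>j. \<Phi> n (inverse (real (Suc j)))) \<longlonglongrightarrow> 1" for n
  proof -
    interpret prob_space "\<beta> n" using nn_prob[OF assms(3)] .
    have "(\<lambda>j. \<Phi> n (inverse (real (Suc j)))) \<longlonglongrightarrow> (\<integral>x. 1 \<partial>\<beta> n)" unfolding \<Phi>_def
    proof (rule integral_dominated_convergence[where w="\<lambda>_. 1"])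
      show "AE x in \<beta> n. (\<lambda>j. gk k (inverse (real (Suc j)) * x)) \<longlonglongrightarrow> 1"
      proof (intro AE_I2)
        fix x
        have "(\<lambda>j. gk k (inverse (real (Suc j)) * x)) \<longlonglongrightarrow> gk k (0 * x)"
          by (intro isCont_tendsto_compose[OF gk_cont] tendsto_mult LIMSEQ_inverse_real_of_nat
              tendsto_const)
        then show "(\<lambda>j. gk k (inverse (real (Suc j)) * x)) \<longlonglongrightarrow> 1" by (simp add: gk_at0)
      qed
    qed (auto intro!: meas_nn[OF assms(3)] simp: gk_abs)
    then show ?thesis by (simp add: prob_space)
  qed
  have root: "\<exists>r>0. \<Phi> n r = 1 / 2" for n
  proof -
    have "eventually (\<lambda>j. \<Phi> n (real j) < 1/2) sequentially"
      by (rule order_tendstoD(2)[OF lim_inf]) simp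
    moreover have "eventually (\<lambda>j. \<Phi> n (inverse (real (Suc j))) > 1/2) sequentially"
      by (rule order_tendstoD(1)[OF lim_zero]) simp
    moreover have "eventually (\<lambda>j. j \<ge> (1::nat)) sequentially"
      by (rule eventually_ge_at_top)
    ultimately have "eventually (\<lambda>j. \<Phi> n (real j) < 1/2 \<and>
        \<Phi> n (inverse (real (Suc j))) > 1/2 \<and> j \<ge> 1) sequentially"
      by eventually_elim auto
    then obtain j where j: "\<Phi> n (real j) < 1/2" "\<Phi> n (inverse (real (Suc j))) > 1/2" "j \<ge> 1"
      unfolding eventually_sequentially by blast
    have "inverse (real (Suc j)) \<le> 1" by (simp add: inverse_le_1_iff)
    also have "1 \<le> real j" using j by simp
    finally have le: "inverse (real (Suc j)) \<le> real j" .
    from IVT2[of "\<Phi> n" "real j" "1/2" "inverse (real (Suc j))", OF _ _ le] j \<Phi>cont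
    obtain r where r: "r \<ge> inverse (real (Suc j))" "\<Phi> n r = 1/2" by force
    have "inverse (real (Suc j)) > 0" by simp
    then have "r > 0" using r(1) by linarith
    then show ?thesis using r(2) by blast
  qed
  obtain a where a: "\<And>n. a n > 0" "\<And>n. \<Phi> n (a n) = 1 / 2"
    using root by metis
  have \<Psi>neq: "\<Psi> c \<noteq> 1 / 2" if c: "c > 0" "c \<noteq> 1" for c
  proof
    assume eq: "\<Psi> c = 1 / 2"
    have AEeq: "AE x in \<gamma>. gk k (c * x) = gk k x"
    proof (cases "c < 1")
      case True
      have "AE x in \<gamma>. gk k x = gk k (c * x)"
        using eq G1 c True
        by (intro AE_eq_of_int_eq integrable_gk[OF \<gamma>nn, of k 1, simplified] integrable_gk[OF \<gamma>nn])
           (auto simp: nn_space[OF \<gamma>nn] \<Psi>_def intro!: gk_mono mult_left_le_one_le)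
      then show ?thesis by auto
    next
      case False
      then have "c > 1" using c by simp
      show "AE x in \<gamma>. gk k (c * x) = gk k x"
        using eq G1 c \<open>c > 1\<close>
        by (intro AE_eq_of_int_eq integrable_gk[OF \<gamma>nn, of k 1, simplified] integrable_gk[OF \<gamma>nn])
           (auto simp: nn_space[OF \<gamma>nn] \<Psi>_def intro!: gk_mono
             mult_le_cancel_right1[THEN iffD2])
    qed
    have "AE x in \<gamma>. gk k x = 0"
      using AEeq AEg0 AE_space
    proof eventually_elim
      case (elim x)
      then have x: "x > 0" by (auto simp: nn_space[OF \<gamma>nn])
      show ?case
      proof (cases "x < 1")
        case True
        then show ?thesis using gk_strict[OF k1 c x True] elim by simp
      next
        case False
        then show ?thesis by (intro gk_zero[OF k1]) simp
      qed
    qed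
    then have "(\<integral>x. gk k x \<partial>\<gamma>) = 0" by (rule integral_eq_zero_AE)
    with G1 show False by simp
  qed
  have \<Psi>1: "\<Psi> 1 = 1 / 2" using G1 by (simp add: \<Psi>_def)
  have \<Psi>lt: "\<Psi> c > 1 / 2" if "0 < c" "c < 1" for c
    using \<Psi>mono[of c 1] \<Psi>neq[of c] that \<Psi>1 by simp
  have \<Psi>gt: "\<Psi> c < 1 / 2" if "c > 1" for c
    using \<Psi>mono[of 1 c] \<Psi>neq[of c] that \<Psi>1 by simp
  have alim: "a \<longlonglongrightarrow> 1"
  proof (rule LIMSEQ_I)
    fix r :: real assume r: "0 < r"
    define e where "e = min r (1/2)"
    have e: "0 < e" "e \<le> r" "e < 1" using r by (auto simp: e_def)
    have "eventually (\<lambda>n. \<Phi> n (1 - e) > 1/2) sequentially"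
      by (rule order_tendstoD(1)[OF \<Phi>lim \<Psi>lt]) (use e in auto)
    moreover have "eventually (\<lambda>n. \<Phi> n (1 + e) < 1/2) sequentially"
      by (rule order_tendstoD(2)[OF \<Phi>lim \<Psi>gt]) (use e in auto)
    ultimately have "eventually (\<lambda>n. norm (a n - 1) < r) sequentially"
    proof eventually_elim
      case (elim n)
      have "\<not> a n \<le> 1 - e"
      proof
        assume "a n \<le> 1 - e"
        then have "\<Phi> n (1 - e) \<le> \<Phi> n (a n)" by (rule \<Phi>mono)
        then show False using elim a(2)[of n] by simp
      qed
      moreover have "\<not> a n \<ge> 1 + e"
      proof
        assume "a n \<ge> 1 + e"
        then have "\<Phi> n (a n) \<le> \<Phi> n (1 + e)" by (rule \<Phi>mono)
        then show False using elim a(2)[of n] by simp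
      qed
      ultimately show ?case using e by auto
    qed
    then show "\<exists>no. \<forall>n\<ge>no. norm (a n - 1) < r" by (simp add: eventually_sequentially)
  qed
  have PW: "\<forall>n. PWd d (pushT (a n) (\<beta> n))"
    using PW_push[OF assms(3) assms(4) a(1) d2] a(2) by (simp add: \<Phi>_def k_def)
  have WC: "weak_conv_nonneg (\<lambda>n. pushT (a n) (\<beta> n)) \<gamma>"
    unfolding weak_conv_nonneg_def
  proof (intro allI impI)
    fix f :: "real \<Rightarrow> real"
    assume "continuous_on {0..} f \<and> bounded (f ` {0..})"
    then have fc: "continuous_on {0..} f" and fb: "bounded (f ` {0..})" by auto
    obtain B where B: "\<forall>y\<in>f ` {0..}. norm y \<le> B" using fb unfolding bounded_iff by blast
    define F where "F x = f (max 0 x)" for x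
    have "continuous_on UNIV F" unfolding F_def
      by (rule continuous_on_compose2[OF fc]) (auto intro!: continuous_intros)
    then have Fc: "isCont F x" for x using continuous_on_eq_continuous_at by blast
    have FB: "\<bar>F x\<bar> \<le> B" for x using B unfolding F_def by auto
    have lim: "(\<lambda>n. \<integral>x. F (a n * x) \<partial>\<beta> n) \<longlonglongrightarrow> (\<integral>x. F (1 * x) \<partial>\<gamma>)"
      by (rule conv_lemma[OF assms(3) \<gamma>nn assms(5) Fc FB alim])
    have e1: "(\<integral>x. f x \<partial>pushT (a n) (\<beta> n)) = (\<integral>x. F (a n * x) \<partial>\<beta> n)" for n
    proof -
      have "(\<integral>x. f x \<partial>pushT (a n) (\<beta> n)) = (\<integral>x. f (a n * x) \<partial>\<beta> n)"
        by (rule int_push[OF assms(3) a(1) borel_measurable_continuous_on_restrict[OF fc]])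
      also have "\<dots> = (\<integral>x. F (a n * x) \<partial>\<beta> n)"
        using a(1)[of n] by (intro Bochner_Integration.integral_cong)
          (auto simp: nn_space[OF assms(3)] F_def)
      finally show ?thesis .
    qed
    have e2: "(\<integral>x. F (1 * x) \<partial>\<gamma>) = (\<integral>x. f x \<partial>\<gamma>)"
      by (intro Bochner_Integration.integral_cong) (auto simp: nn_space[OF \<gamma>nn] F_def)
    show "(\<lambda>n. \<integral>x. f x \<partial>pushT (a n) (\<beta> n)) \<longlonglongrightarrow> (\<integral>x. f x \<partial>\<gamma>)"
      using lim unfolding e1 e2 .
  qed
  show ?thesis using a(1) alim PW WC by blast
qed

end
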